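(* Assume the standing assumptions (A1)–(A3). Let \[ v^*_{IA}:=\min_{x,\lambda,Y}\ c^Tx+\lambda\ \ \text{s.t.}\ \ x\in\mathcal X,\ \ \lambda g_1g_1^T-\tfrac12G(x)+\tfrac12H(Y)\in\mathrm{IA}(\widehat{\mathcal U}\times\mathbb R^m_+), \] with $\lambda\in\mathbb R$, $Y\in\mathbb R^{n_2\times k}$. Then $v^*_{IA}=v^*_{Aff}$.
   Context: Data: $A\in\mathbb R^{m\times n_1}$, $B\in\mathbb R^{m\times n_2}$, $c\in\mathbb R^{n_1}$, $d\in\mathbb R^{n_2}$, $F\in\mathbb R^{m\times k}$, $\mathcal X\subseteq\mathbb R^{n_1}$ closed convex. $\widehat{\mathcal U}\subseteq\mathbb R_+\times\mathbb R^{k-1}$ closed, convex, full-dimensional cone, dual cone $\widehat{\mathcal U}^*$; $\mathcal U:=\{u\in\widehat{\mathcal U}:u_1=1\}$ nonempty compact. $e_1\in\mathbb R^k$ first basis vector, $g_1=(e_1;0)\in\mathbb R^{k+m}$. (RLP): $v^*_{RLP}:=\inf\{c^Tx+\sup_{u\in\mathcal U}d^Ty(u)\}$ over $x\in\mathcal X$, $y:\mathcal U\to\mathbb R^{n_2}$ with $Ax+By(u)\ge Fu\ \forall u\in\mathcal U$. (A1) $\mathcal X,\widehat{\mathcal U}$ tractable; (A2) (RLP) feasible; (A3) $v^*_{RLP}$ finite. $v^*_{Aff}:=\inf\{c^Tx+\sup_{u\in\mathcal U}d^TYu\}$ over $x\in\mathcal X$, $Y\in\mathbb R^{n_2\times k}$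 with $Ax+BYu\ge Fu\ \forall u\in\mathcal U$. $G(x):=\begin{pmatrix}0&(F-Axe_1^T)^T\\ F-Axe_1^T&0\end{pmatrix}$, $H(Y):=\begin{pmatrix}-e_1d^TY-Y^Tde_1^T&(BY)^T\\ BY&0\end{pmatrix}$. $\mathrm{IA}(\widehat{\mathcal U}\times\mathbb R^m_+):=\{S=\begin{pmatrix}S_{11}&S_{21}^T\\S_{21}&S_{22}\end{pmatrix}\in\mathcal S^{k+m}: S_{11}=e_1\alpha^T+\alpha e_1^T,\ \alpha\in\widehat{\mathcal U}^*,\ \text{each row of }S_{21}\text{ in }\widehat{\mathcal U}^*,\ S_{22}\ge0\text{ entrywise}\}$. *)

theory Defs
  imports "HOL-Analysis.Analysis"
begin

text \<open>Vectors/matrices are indexed by finite types: real^'n is R^n, and a matrix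
  M :: real^'c^'r has rows indexed by 'r and columns by 'c (entry M $ i $ j).
  The distinguished index i1 :: 'k plays the role of the first coordinate (e_1).\<close>

definition dual_cone :: "(real^'k) set \<Rightarrow> (real^'k) set" where
  "dual_cone K = {a. \<forall>u\<in>K. 0 \<le> a \<bullet> u}"

definition outer_vec :: "real^'r \<Rightarrow> real^'c \<Rightarrow> real^'c^'r" where
  "outer_vec a b = (\<chi> i j. a $ i * b $ j)"

definition unit_vec :: "'k::finite \<Rightarrow> real^'k" where
  "unit_vec i1 = (\<chi> j. if j = i1 then 1 else 0)"

definition Useg :: "'k::finite \<Rightarrow> (real^'k) set \<Rightarrow> (real^'k) set" where
  "Useg i1 Uhat = {u \<in> Uhat. u $ i1 = 1}"

definition v_RLP ::
  "'k::finite \<Rightarrow> real^'n1^'m \<Rightarrow> real^'n2^'m \<Rightarrow> real^'n1 \<Rightarrow> real^'n2 \<Rightarrow> real^'k^'m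
   \<Rightarrow> (real^'n1) set \<Rightarrow> (real^'k) set \<Rightarrow> ereal" where
  "v_RLP i1 A B c d F X Uhat =
     (INF p \<in> {(x, y). x \<in> X \<and> (\<forall>u\<in>Useg i1 Uhat. A *v x + B *v y u \<ge> F *v u)}.
        ereal (c \<bullet> fst p) + (SUP u \<in> Useg i1 Uhat. ereal (d \<bullet> snd p u)))"

definition RLP_feasible ::
  "'k::finite \<Rightarrow> real^'n1^'m \<Rightarrow> real^'n2^'m \<Rightarrow> real^'k^'m
   \<Rightarrow> (real^'n1) set \<Rightarrow> (real^'k) set \<Rightarrow> bool" where
  "RLP_feasible i1 A B F X Uhat =
     (\<exists>x\<in>X. \<exists>y::real^'k \<Rightarrow> real^'n2. \<forall>u\<in>Useg i1 Uhat. A *v x + B *v y u \<ge> F *v u)"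

definition v_Aff ::
  "'k::finite \<Rightarrow> real^'n1^'m \<Rightarrow> real^'n2^'m \<Rightarrow> real^'n1 \<Rightarrow> real^'n2 \<Rightarrow> real^'k^'m
   \<Rightarrow> (real^'n1) set \<Rightarrow> (real^'k) set \<Rightarrow> ereal" where
  "v_Aff i1 A B c d F X Uhat =
     (INF p \<in> {(x, Y::real^'k^'n2). x \<in> X \<and> (\<forall>u\<in>Useg i1 Uhat. A *v x + B *v (Y *v u) \<ge> F *v u)}.
        ereal (c \<bullet> fst p) + (SUP u \<in> Useg i1 Uhat. ereal (d \<bullet> (snd p *v u))))"

text \<open>(k+m)x(k+m) block matrices, indexed by the sum type 'k + 'm
  (Inl = first block of size k, Inr = second block of size m).\<close>

definition G_mat :: "'k::finite \<Rightarrow> real^'n1^'m \<Rightarrow> real^'k^'m \<Rightarrow> real^'n1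
   \<Rightarrow> real^('k + 'm::finite)^('k + 'm)" where
  "G_mat i1 A F x = (\<chi> p q. case (p, q) of
      (Inl i, Inl j) \<Rightarrow> 0
    | (Inl i, Inr r) \<Rightarrow> (F - outer_vec (A *v x) (unit_vec i1)) $ r $ i
    | (Inr r, Inl j) \<Rightarrow> (F - outer_vec (A *v x) (unit_vec i1)) $ r $ j
    | (Inr r, Inr s) \<Rightarrow> 0)"

definition H_mat :: "'k::finite \<Rightarrow> real^'n2^'m \<Rightarrow> real^'n2 \<Rightarrow> real^'k^'n2
   \<Rightarrow> real^('k + 'm::finite)^('k + 'm)" where
  "H_mat i1 B d Y = (\<chi> p q. case (p, q) of
      (Inl i, Inl j) \<Rightarrow> - (outer_vec (unit_vec i1) (d v* Y)) $ i $ j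
                        - (outer_vec (transpose Y *v d) (unit_vec i1)) $ i $ j
    | (Inl i, Inr r) \<Rightarrow> (B ** Y) $ r $ i
    | (Inr r, Inl j) \<Rightarrow> (B ** Y) $ r $ j
    | (Inr r, Inr s) \<Rightarrow> 0)"

text \<open>g_1 g_1^T with g_1 = (e_1; 0).\<close>
definition g1g1T :: "'k::finite \<Rightarrow> real^('k + 'm::finite)^('k + 'm)" where
  "g1g1T i1 = (\<chi> p q. if p = Inl i1 \<and> q = Inl i1 then 1 else 0)"

definition IA_set :: "'k::finite \<Rightarrow> (real^'k) set \<Rightarrow> (real^('k + 'm::finite)^('k + 'm)) set" where
  "IA_set i1 Uhat = {S. transpose S = S
      \<and> (\<exists>\<alpha>\<in>dual_cone Uhat. \<forall>i j. S $ Inl i $ Inl j =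
            (outer_vec (unit_vec i1) \<alpha> + outer_vec \<alpha> (unit_vec i1)) $ i $ j)
      \<and> (\<forall>r. (\<chi> j. S $ Inr r $ Inl j) \<in> dual_cone Uhat)
      \<and> (\<forall>r s. 0 \<le> S $ Inr r $ Inr s)}"

definition v_IA ::
  "'k::finite \<Rightarrow> real^'n1^'m \<Rightarrow> real^'n2^'m \<Rightarrow> real^'n1 \<Rightarrow> real^'n2 \<Rightarrow> real^'k^'m
   \<Rightarrow> (real^'n1) set \<Rightarrow> (real^'k) set \<Rightarrow> ereal" where
  "v_IA i1 A B c d F X Uhat =
     (INF p \<in> {(x, lam, Y::real^'k^'n2). x \<in> X \<and>
          lam *\<^sub>R g1g1T i1 - (1/2) *\<^sub>R G_mat i1 A F x + (1/2) *\<^sub>R H_mat i1 B d Y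
            \<in> (IA_set i1 Uhat :: (real^('k + 'm)^('k + 'm)) set)}.
        ereal (c \<bullet> fst p + fst (snd p)))"

end

theory Submission
  imports Defs
begin

lemma cone_add_scale:
  assumes "convex S" "cone S"
  shows "\<And>x y. x\<in>S \<Longrightarrow> y\<in>S \<Longrightarrow> x + y \<in> S" "\<And>x c. x\<in>S \<Longrightarrow> 0 \<le> c \<Longrightarrow> c *\<^sub>R x \<in> S"
  using convex_cone[of S] assms by auto

lemma Uhat_split:
  fixes Uhat :: "(real^'k::finite) set"
  assumes "convex Uhat" "cone Uhat" "Useg i1 Uhat \<noteq> {}" "compact (Useg i1 Uhat)"
    and pos: "\<forall>u\<in>Uhat. 0 \<le> u $ i1" and u: "u \<in> Uhat"
  shows "u = 0 \<or> (u $ i1 > 0 \<and> (1 / u $ i1) *\<^sub>R u \<in> Useg i1 Uhat)"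
proof (cases "u $ i1 = 0")
  case False
  with pos u have p: "u $ i1 > 0" by force
  have "(1 / u $ i1) *\<^sub>R u \<in> Uhat" using cone_add_scale(2)[OF assms(1,2) u] p by simp
  then show ?thesis using p by (simp add: Useg_def)
next
  case True
  show ?thesis
  proof (rule ccontr)
    assume nz: "\<not> ?thesis"
    hence unz: "u \<noteq> 0" by auto
    obtain u0 where u0: "u0 \<in> Useg i1 Uhat" using assms(3) by auto
    have "bounded (Useg i1 Uhat)" using assms(4) compact_imp_bounded by blast
    then obtain M where M: "\<And>v. v \<in> Useg i1 Uhat \<Longrightarrow> norm v \<le> M" by (auto simp: bounded_iff)
    define t where "t = (M + norm u0 + 1) / norm u"
    have np: "norm u > 0" using unz by simp
    have Mp: "M + norm u0 + 1 > 0" using M[OF u0] norm_ge_zero[of u0] by linarith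
    hence t0: "t \<ge> 0" using t_def np by simp
    have "u0 + t *\<^sub>R u \<in> Uhat"
      using cone_add_scale[OF assms(1,2)] u u0 t0 by (auto simp: Useg_def)
    moreover have "(u0 + t *\<^sub>R u) $ i1 = 1" using u0 True by (simp add: Useg_def)
    ultimately have "u0 + t *\<^sub>R u \<in> Useg i1 Uhat" by (simp add: Useg_def)
    hence "norm (u0 + t *\<^sub>R u) \<le> M" by (rule M)
    moreover have "norm (t *\<^sub>R u) \<le> norm (u0 + t *\<^sub>R u) + norm u0"
      by (metis add.commute add_diff_cancel_left' norm_triangle_ineq4)
    moreover have "norm (t *\<^sub>R u) = M + norm u0 + 1" using Mp np by (simp add: t_def)
    ultimately show False by linarith
  qed
qed

lemma dual_cone_iff:
  fixes Uhat :: "(real^'k::finite) set"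
  assumes "convex Uhat" "cone Uhat" "Useg i1 Uhat \<noteq> {}" "compact (Useg i1 Uhat)"
    and pos: "\<forall>u\<in>Uhat. 0 \<le> u $ i1"
  shows "a \<in> dual_cone Uhat \<longleftrightarrow> (\<forall>u\<in>Useg i1 Uhat. 0 \<le> a \<bullet> u)"
proof
  assume "a \<in> dual_cone Uhat" thus "\<forall>u\<in>Useg i1 Uhat. 0 \<le> a \<bullet> u"
    by (auto simp: dual_cone_def Useg_def)
next
  assume H: "\<forall>u\<in>Useg i1 Uhat. 0 \<le> a \<bullet> u"
  show "a \<in> dual_cone Uhat" unfolding dual_cone_def
  proof
    show "\<forall>u\<in>Uhat. 0 \<le> a \<bullet> u"
    proof
      fix u assume u: "u \<in> Uhat"
      from Uhat_split[OF assms u] show "0 \<le> a \<bullet> u"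
      proof
        assume "u = 0" thus ?thesis by simp
      next
        assume p: "u $ i1 > 0 \<and> (1 / u $ i1) *\<^sub>R u \<in> Useg i1 Uhat"
        hence "0 \<le> a \<bullet> ((1 / u $ i1) *\<^sub>R u)" using H by blast
        hence "0 \<le> (1 / u $ i1) * (a \<bullet> u)" by simp
        thus ?thesis using p by (simp add: zero_le_divide_iff)
      qed
    qed
  qed
qed

lemma S_entries:
  fixes A :: "real^'n1^'m::finite" and B :: "real^'n2^'m" and d :: "real^'n2"
    and F :: "real^'k::finite^'m" and Y :: "real^'k^'n2" and i1 :: 'k
  assumes S: "S = lam *\<^sub>R g1g1T i1 - (1/2) *\<^sub>R G_mat i1 A F x + (1/2) *\<^sub>R H_mat i1 B d Y"
  shows "S $ Inl i $ Inl j = lam * (unit_vec i1 $ i) * (unit_vec i1 $ j)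
            - (1/2) * ((unit_vec i1 $ i) * (d v* Y) $ j + (d v* Y) $ i * (unit_vec i1 $ j))"
    and "S $ Inr r $ Inl j = (1/2) * ((B ** Y) $ r $ j - F $ r $ j + (A *v x) $ r * (unit_vec i1 $ j))"
    and "S $ Inl j $ Inr r = (1/2) * ((B ** Y) $ r $ j - F $ r $ j + (A *v x) $ r * (unit_vec i1 $ j))"
    and "S $ Inr r $ Inr s = 0"
  unfolding S by (auto simp: g1g1T_def G_mat_def H_mat_def outer_vec_def unit_vec_def algebra_simps)

lemma row_dot:
  fixes A :: "real^'n1^'m::finite" and B :: "real^'n2^'m" and d :: "real^'n2"
    and F :: "real^'k::finite^'m" and Y :: "real^'k^'n2" and i1 :: 'k
  shows "(\<chi> j. (1/2) * ((B ** Y) $ r $ j - F $ r $ j + (A *v x) $ r * (unit_vec i1 $ j))) \<bullet> u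
     = (1/2) * ((B *v (Y *v u)) $ r - (F *v u) $ r + (A *v x) $ r * u $ i1)"
proof -
  have "(\<chi> j. (1/2) * ((B ** Y) $ r $ j - F $ r $ j + (A *v x) $ r * (unit_vec i1 $ j))) \<bullet> u
     = (\<Sum>j\<in>UNIV. (1/2) * ((B ** Y) $ r $ j * u $ j) - (1/2) * (F $ r $ j * u $ j)
            + (1/2) * (A *v x) $ r * (if j = i1 then u $ j else 0))"
    by (auto simp: inner_vec_def unit_vec_def algebra_simps intro!: sum.cong)
  also have "\<dots> = (1/2) * ((B *v (Y *v u)) $ r - (F *v u) $ r + (A *v x) $ r * u $ i1)"
  proof -
    have e: "(\<Sum>j\<in>UNIV. (1/2) * (A *v x) $ r * (if j = i1 then u $ j else 0)) = (1/2) * (A *v x) $ r * u $ i1"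
    proof -
      have "(\<Sum>j\<in>UNIV. (1/2) * (A *v x) $ r * (if j = i1 then u $ j else 0))
          = (\<Sum>j\<in>UNIV. if j = i1 then (1/2) * (A *v x) $ r * u $ i1 else 0)"
        by (rule sum.cong) auto
      thus ?thesis by simp
    qed
    have b: "(\<Sum>j\<in>UNIV. (1/2) * ((B ** Y) $ r $ j * u $ j)) = (1/2) * (B *v (Y *v u)) $ r"
      unfolding matrix_vector_mul_assoc by (simp add: matrix_vector_mult_def sum_distrib_left)
    have f: "(\<Sum>j\<in>UNIV. (1/2) * (F $ r $ j * u $ j)) = (1/2) * (F *v u) $ r"
      by (simp add: matrix_vector_mult_def sum_distrib_left)
    show ?thesis by (simp only: sum.distrib sum_subtractf e b f) (simp add: algebra_simps)
  qed
  finally show ?thesis .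
qed

lemma unit_dot: "(unit_vec i1 :: real^'k::finite) \<bullet> u = u $ i1"
proof -
  have "(unit_vec i1 :: real^'k) \<bullet> u = (\<Sum>j\<in>UNIV. if j = i1 then u $ i1 else 0)"
    unfolding inner_vec_def unit_vec_def by (rule sum.cong) auto
  thus ?thesis by simp
qed

lemma alpha_dot:
  fixes d :: "real^'n2::finite" and Y :: "real^'k::finite^'n2"
  shows "((1/2) *\<^sub>R (lam *\<^sub>R unit_vec i1 - d v* Y)) \<bullet> u = (1/2) * (lam * u $ i1 - d \<bullet> (Y *v u))"
  by (simp add: inner_diff_left unit_dot dot_lmul_matrix)

lemma feas:
  fixes A :: "real^'n1^'m::finite" and B :: "real^'n2^'m" and d :: "real^'n2"
    and F :: "real^'k::finite^'m" and Y :: "real^'k^'n2" and i1 :: 'k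
    and Uhat :: "(real^'k) set"
  assumes U: "convex Uhat" "cone Uhat" "Useg i1 Uhat \<noteq> {}" "compact (Useg i1 Uhat)"
      "\<forall>u\<in>Uhat. 0 \<le> u $ i1"
  assumes S: "S = lam *\<^sub>R g1g1T i1 - (1/2) *\<^sub>R G_mat i1 A F x + (1/2) *\<^sub>R H_mat i1 B d Y"
  shows "S \<in> IA_set i1 Uhat \<longleftrightarrow>
     (\<forall>u\<in>Useg i1 Uhat. F *v u \<le> A *v x + B *v (Y *v u)) \<and> (\<forall>u\<in>Useg i1 Uhat. d \<bullet> (Y *v u) \<le> lam)"
    (is "?L \<longleftrightarrow> ?C1 \<and> ?C2")
proof -
  note E = S_entries[OF S]
  define \<alpha> where "\<alpha> = (1/2) *\<^sub>R (lam *\<^sub>R unit_vec i1 - d v* Y)"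
  have rowv: "(\<chi> j. S $ Inr r $ Inl j) = (\<chi> j. (1/2) * ((B ** Y) $ r $ j - F $ r $ j + (A *v x) $ r * (unit_vec i1 $ j)))" for r
    by (simp add: E)
  have rows: "(\<forall>r. (\<chi> j. S $ Inr r $ Inl j) \<in> dual_cone Uhat) \<longleftrightarrow> ?C1"
  proof -
    have "(\<forall>r. (\<chi> j. S $ Inr r $ Inl j) \<in> dual_cone Uhat) \<longleftrightarrow>
        (\<forall>r. \<forall>u\<in>Useg i1 Uhat. 0 \<le> (1/2) * ((B *v (Y *v u)) $ r - (F *v u) $ r + (A *v x) $ r))"
      by (simp only: dual_cone_iff[OF U] rowv row_dot) (auto simp: Useg_def)
    also have "\<dots> \<longleftrightarrow> ?C1" unfolding less_eq_vec_def
      by (auto; smt (verit) vector_add_component)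
    finally show ?thesis .
  qed
  have S11: "S $ Inl i $ Inl j = (outer_vec (unit_vec i1) \<alpha> + outer_vec \<alpha> (unit_vec i1)) $ i $ j" for i j
    by (simp add: E \<alpha>_def outer_vec_def unit_vec_def algebra_simps)
  have adual: "\<alpha> \<in> dual_cone Uhat \<longleftrightarrow> ?C2"
    by (simp only: dual_cone_iff[OF U] \<alpha>_def alpha_dot) (auto simp: Useg_def)
  have sym: "transpose S = S"
  proof -
    have "S $ q $ p = S $ p $ q" for p q
      by (cases p; cases q) (simp_all add: E algebra_simps)
    thus ?thesis by (simp add: transpose_def vec_eq_iff)
  qed
  show ?thesis
  proof
    assume L: ?L
    then obtain \<beta> where b: "\<beta> \<in> dual_cone Uhat"
      and bS: "\<forall>i j. S $ Inl i $ Inl j = (outer_vec (unit_vec i1) \<beta> + outer_vec \<beta> (unit_vec i1)) $ i $ j"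
      unfolding IA_set_def by blast
    have "\<beta> = \<alpha>"
    proof (rule vec_eq_iff[THEN iffD2, rule_format])
      fix j
      have 1: "(outer_vec (unit_vec i1) \<beta> + outer_vec \<beta> (unit_vec i1)) $ i1 $ j
            = (outer_vec (unit_vec i1) \<alpha> + outer_vec \<alpha> (unit_vec i1)) $ i1 $ j"
        using bS S11 by metis
      show "\<beta> $ j = \<alpha> $ j"
      proof (cases "j = i1")
        case True thus ?thesis using 1 by (simp add: outer_vec_def unit_vec_def)
      next
        case False thus ?thesis using 1 by (simp add: outer_vec_def unit_vec_def)
      qed
    qed
    with b adual have ?C2 by simp
    moreover have ?C1 using L rows unfolding IA_set_def by blast
    ultimately show "?C1 \<and> ?C2" by blast
  next
    assume C: "?C1 \<and> ?C2"
    show ?L unfolding IA_set_def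
      using sym S11 adual C rows by (auto simp: E)
  qed
qed

theorem theorem2:
  fixes A :: "real^'n1^'m" and B :: "real^'n2^'m" and c :: "real^'n1" and d :: "real^'n2"
    and F :: "real^'k^'m" and X :: "(real^'n1) set" and Uhat :: "(real^'k) set"
    and i1 :: 'k
  assumes X_closed: "closed X" and X_convex: "convex X"
    and U_closed: "closed Uhat" and U_convex: "convex Uhat" and U_cone: "cone Uhat"
    and U_fulldim: "interior Uhat \<noteq> {}"
    and U_pos: "\<forall>u\<in>Uhat. 0 \<le> u $ i1"
    and Useg_ne: "Useg i1 Uhat \<noteq> {}" and Useg_compact: "compact (Useg i1 Uhat)"
    and A2: "RLP_feasible i1 A B F X Uhat"
    and A3: "\<bar>v_RLP i1 A B c d F X Uhat\<bar> \<noteq> \<infinity>"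
  shows "v_IA i1 A B c d F X Uhat = v_Aff i1 A B c d F X Uhat"
proof -
  note U = U_convex U_cone Useg_ne Useg_compact U_pos
  note FE = feas[OF U refl, where 'm='m]
  let ?U = "Useg i1 Uhat"
  show ?thesis
  proof (rule antisym)
    show "v_IA i1 A B c d F X Uhat \<le> v_Aff i1 A B c d F X Uhat"
      unfolding v_Aff_def
    proof (rule INF_greatest)
      fix p assume "p \<in> {(x, Y::real^'k^'n2). x \<in> X \<and> (\<forall>u\<in>?U. A *v x + B *v (Y *v u) \<ge> F *v u)}"
      then obtain x Y where p: "p = (x, Y)" and x: "x \<in> X"
        and C1: "\<forall>u\<in>?U. F *v u \<le> A *v x + B *v (Y *v u)" by auto
      have "continuous_on ?U (\<lambda>u. (d v* Y) \<bullet> u)"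
        by (intro continuous_intros)
      then obtain us where us: "us \<in> ?U" and usmax: "\<forall>u\<in>?U. (d v* Y) \<bullet> u \<le> (d v* Y) \<bullet> us"
        using continuous_attains_sup[OF Useg_compact Useg_ne] by blast
      define lam where "lam = d \<bullet> (Y *v us)"
      have C2: "\<forall>u\<in>?U. d \<bullet> (Y *v u) \<le> lam"
        using usmax by (simp add: lam_def dot_lmul_matrix)
      have sup: "(SUP u\<in>?U. ereal (d \<bullet> (Y *v u))) = ereal lam"
      proof (rule antisym)
        show "(SUP u\<in>?U. ereal (d \<bullet> (Y *v u))) \<le> ereal lam"
          using C2 by (auto intro: SUP_least)
        show "ereal lam \<le> (SUP u\<in>?U. ereal (d \<bullet> (Y *v u)))"
          unfolding lam_def using us by (rule SUP_upper)
      qed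
      have mem: "(x, lam, Y) \<in> {(x, lam, Y::real^'k^'n2). x \<in> X \<and>
          lam *\<^sub>R g1g1T i1 - (1/2) *\<^sub>R G_mat i1 A F x + (1/2) *\<^sub>R H_mat i1 B d Y
            \<in> (IA_set i1 Uhat :: (real^('k + 'm)^('k + 'm)) set)}"
        using x C1 C2 FE[of lam A F x B d Y] by simp
      have "v_IA i1 A B c d F X Uhat \<le> ereal (c \<bullet> x + lam)"
        unfolding v_IA_def using mem by (rule INF_lower2) simp
      also have "\<dots> = ereal (c \<bullet> fst p) + (SUP u\<in>?U. ereal (d \<bullet> (snd p *v u)))"
        using sup p by simp
      finally show "v_IA i1 A B c d F X Uhat \<le> ereal (c \<bullet> fst p) + (SUP u\<in>?U. ereal (d \<bullet> (snd p *v u)))" .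
    qed
  next
    show "v_Aff i1 A B c d F X Uhat \<le> v_IA i1 A B c d F X Uhat"
      unfolding v_IA_def
    proof (rule INF_greatest)
      fix p assume "p \<in> {(x, lam, Y::real^'k^'n2). x \<in> X \<and>
          lam *\<^sub>R g1g1T i1 - (1/2) *\<^sub>R G_mat i1 A F x + (1/2) *\<^sub>R H_mat i1 B d Y
            \<in> (IA_set i1 Uhat :: (real^('k + 'm)^('k + 'm)) set)}"
      then obtain x lam Y where p: "p = (x, lam, Y)" and x: "x \<in> X"
        and S: "lam *\<^sub>R g1g1T i1 - (1/2) *\<^sub>R G_mat i1 A F x + (1/2) *\<^sub>R H_mat i1 B d Y
            \<in> (IA_set i1 Uhat :: (real^('k + 'm)^('k + 'm)) set)" by auto
      have C1: "\<forall>u\<in>?U. F *v u \<le> A *v x + B *v (Y *v u)"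
        and C2: "\<forall>u\<in>?U. d \<bullet> (Y *v u) \<le> lam" using S FE[of lam A F x B d Y] by simp_all
      have mem: "(x, Y) \<in> {(x, Y::real^'k^'n2). x \<in> X \<and> (\<forall>u\<in>?U. A *v x + B *v (Y *v u) \<ge> F *v u)}"
        using x C1 by auto
      have "v_Aff i1 A B c d F X Uhat \<le> ereal (c \<bullet> x) + (SUP u\<in>?U. ereal (d \<bullet> (Y *v u)))"
        unfolding v_Aff_def using mem by (rule INF_lower2) simp
      also have "\<dots> \<le> ereal (c \<bullet> x) + ereal lam"
        using C2 by (intro add_left_mono SUP_least) auto
      finally show "v_Aff i1 A B c d F X Uhat \<le> ereal (c \<bullet> fst p + fst (snd p))"
        using p by simp
    qed
  qed
qed

end
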